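(* For a function $\phi:[1]^m\to[1]^n$ the following are equivalent: (1) $\phi$ is a $\Delta_1[\tau,\gamma_-]^*$-morphism; (2) $\phi$ is an interval-preserving meet-semilattice homomorphism.
   Context: $[1]=\{0<1\}$; $[1]^n$ is the $n$-fold product poset with componentwise order ($[1]^0=[0]$ a point), a Boolean lattice with meet $\min$ and join $\max$ componentwise. An interval in a poset is a non-empty subset $[x,z]=\{y:x\leq y\leq z\}$; a function is interval-preserving if it maps intervals onto intervals. A meet-semilattice homomorphism preserves binary meets. Define $\tau:[1]^2\to[1]^2$, $\tau(x,y)=(y,x)$, and $\gamma_-:[1]^2\to[1]$, $\gamma_-(x,y)=\min(x,y)$. $\Delta_1[\tau,\gamma_-]^*$ denotes the smallest subcategory of $\mathbf{Set}$ containing all functions between $[0]$ and $[1]$, containing $\tau$ and $\gamma_-$, and closed under Cartesian products of functions ($f:[1]^a\to[1]^b$, $g:[1]^c\to[1]^d$ give $f\times g:[1]^{a+c}\to[1]^{b+d}$); its objects are the $[1]^n$. *)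

theory Defs
  imports Main
begin

text \<open>The poset [1]^n is represented as the set of boolean lists of length n,
  with False < True and componentwise order.\<close>

definition cube :: "nat \<Rightarrow> bool list set" where
  "cube n = {xs. length xs = n}"

definition cle :: "bool list \<Rightarrow> bool list \<Rightarrow> bool" where
  "cle xs ys = list_all2 (\<le>) xs ys"

definition cmeet :: "bool list \<Rightarrow> bool list \<Rightarrow> bool list" where
  "cmeet xs ys = map2 min xs ys"

definition interval :: "bool list \<Rightarrow> bool list \<Rightarrow> bool list set" where
  "interval x z = {y. cle x y \<and> cle y z}"

definition is_interval :: "nat \<Rightarrow> bool list set \<Rightarrow> bool" where
  "is_interval n S \<longleftrightarrow> (\<exists>x\<in>cube n. \<exists>z\<in>cube n. cle x z \<and> S = interval x z)"

definition interval_preserving :: "nat \<Rightarrow> nat \<Rightarrow> (bool list \<Rightarrow> bool list) \<Rightarrow> bool" where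
  "interval_preserving m n \<phi> \<longleftrightarrow>
     (\<forall>S. is_interval m S \<longrightarrow> is_interval n (\<phi> ` S))"

definition meet_hom :: "nat \<Rightarrow> (bool list \<Rightarrow> bool list) \<Rightarrow> bool" where
  "meet_hom m \<phi> \<longleftrightarrow>
     (\<forall>x\<in>cube m. \<forall>y\<in>cube m. \<phi> (cmeet x y) = cmeet (\<phi> x) (\<phi> y))"

definition tau :: "bool list \<Rightarrow> bool list" where
  "tau xs = [xs ! 1, xs ! 0]"

definition gamma_minus :: "bool list \<Rightarrow> bool list" where
  "gamma_minus xs = [min (xs ! 0) (xs ! 1)]"

definition fprod :: "nat \<Rightarrow> (bool list \<Rightarrow> bool list) \<Rightarrow> (bool list \<Rightarrow> bool list)
                      \<Rightarrow> bool list \<Rightarrow> bool list" where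
  "fprod a f g xs = f (take a xs) @ g (drop a xs)"

inductive D1gen :: "nat \<Rightarrow> nat \<Rightarrow> (bool list \<Rightarrow> bool list) \<Rightarrow> bool" where
  base: "\<lbrakk>m \<le> 1; n \<le> 1; \<forall>x\<in>cube m. f x \<in> cube n;
          \<forall>x\<in>cube m. \<forall>y\<in>cube m. cle x y \<longrightarrow> cle (f x) (f y)\<rbrakk> \<Longrightarrow> D1gen m n f"
| ident: "D1gen n n id"
| tau: "D1gen 2 2 tau"
| gamma: "D1gen 2 1 gamma_minus"
| comp: "\<lbrakk>D1gen l m f; D1gen m n g\<rbrakk> \<Longrightarrow> D1gen l n (g \<circ> f)"
| prod: "\<lbrakk>D1gen a b f; D1gen c d g\<rbrakk> \<Longrightarrow> D1gen (a + c) (b + d) (fprod a f g)"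

text \<open>A function [1]^m -> [1]^n (only its values on [1]^m matter) is a morphism
  of Delta_1[tau,gamma_-]^* if it agrees on [1]^m with a generated morphism.\<close>
definition D1_morphism :: "nat \<Rightarrow> nat \<Rightarrow> (bool list \<Rightarrow> bool list) \<Rightarrow> bool" where
  "D1_morphism m n \<phi> \<longleftrightarrow> (\<exists>f. D1gen m n f \<and> (\<forall>x\<in>cube m. \<phi> x = f x))"

end

theory Submission
  imports Defs
begin

lemma minb[simp]: "min (a::bool) b = (a \<and> b)" by (cases a; cases b) simp_all

lemma cube_iff[simp]: "x \<in> cube n \<longleftrightarrow> length x = n" by (simp add: cube_def)

lemma cle_length: "cle x y \<Longrightarrow> length x = length y"
  by (simp add: cle_def list_all2_lengthD)
lemma cle_refl[simp]: "cle x x" by (simp add: cle_def list_all2_refl)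
lemma cle_trans: "cle x y \<Longrightarrow> cle y z \<Longrightarrow> cle x z"
  unfolding cle_def using list_all2_trans[of "(\<le>)" "(\<le>)" "(\<le>)"] by (metis order_trans)
lemma cle_nth: "cle x y \<longleftrightarrow> length x = length y \<and> (\<forall>i<length x. x!i \<le> y!i)"
  by (simp add: cle_def list_all2_conv_all_nth)
lemma cle_antisym: "cle x y \<Longrightarrow> cle y x \<Longrightarrow> x = y"
  unfolding cle_nth by (metis nth_equalityI order_antisym)
lemma cle_Nil[simp]: "cle [] y \<longleftrightarrow> y = []" "cle y [] \<longleftrightarrow> y = []"
  by (auto simp: cle_def)
lemma cle_Cons[simp]: "cle (a#x) (b#y) \<longleftrightarrow> a \<le> b \<and> cle x y"
  by (simp add: cle_def)
lemma cle_Cons1: "cle (a#x) y \<longleftrightarrow> (\<exists>b z. y = b#z \<and> a \<le> b \<and> cle x z)"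
  by (cases y) auto
lemma cle_Cons2: "cle y (a#x) \<longleftrightarrow> (\<exists>b z. y = b#z \<and> b \<le> a \<and> cle z x)"
  by (cases y) auto
lemma cle_append: "length u = length u' \<Longrightarrow> cle (u@v) (u'@v') \<longleftrightarrow> cle u u' \<and> cle v v'"
  by (simp add: cle_def list_all2_append)

lemma interval2: "interval [a,b] [c,d] = {[p,q] | p q. a \<le> p \<and> p \<le> c \<and> b \<le> q \<and> q \<le> d}"
proof (rule set_eqI, rule iffI)
  fix y assume "y \<in> interval [a,b] [c,d]"
  then have "cle [a,b] y" "cle y [c,d]" by (simp_all add: interval_def)
  then obtain p q where "y = [p,q]" "a \<le> p" "b \<le> q" unfolding cle_Cons1 by auto
  then show "y \<in> {[p,q] | p q. a \<le> p \<and> p \<le> c \<and> b \<le> q \<and> q \<le> d}" using \<open>cle y [c,d]\<close> by simp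
next
  fix y assume "y \<in> {[p,q] | p q. a \<le> p \<and> p \<le> c \<and> b \<le> q \<and> q \<le> d}"
  then show "y \<in> interval [a,b] [c,d]" by (auto simp: interval_def)
qed

lemma interval1: "[w] \<in> interval [u] [v] \<longleftrightarrow> u \<le> w \<and> w \<le> v"
  by (simp add: interval_def)
lemma interval1': "y \<in> interval [u] [v] \<longleftrightarrow> (\<exists>w. y = [w] \<and> u \<le> w \<and> w \<le> v)"
  by (cases y) (auto simp: interval_def)
lemma gm: "gamma_minus [a,b] = [min a b]" by (simp add: gamma_minus_def)

lemma interval_sub: "y \<in> interval x z \<Longrightarrow> length y = length x"
  by (auto simp: interval_def dest: cle_length)
lemma interval_same: "interval x x = {x}"
  by (auto simp: interval_def intro: cle_antisym)

lemma cmeet_length[simp]: "length (cmeet x y) = min (length x) (length y)"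
  by (simp add: cmeet_def)
lemma cmeet_nth: "i < length x \<Longrightarrow> i < length y \<Longrightarrow> cmeet x y ! i = min (x!i) (y!i)"
  by (simp add: cmeet_def)
lemma cle_cmeet1: "cle x y \<Longrightarrow> cmeet x y = x"
  by (auto simp: cle_nth cmeet_nth intro!: nth_equalityI)
lemma cle_cmeet2: "cle x y \<Longrightarrow> cmeet y x = x"
  by (auto simp: cle_nth cmeet_nth intro!: nth_equalityI)
lemma cmeet_append: "length u = length u' \<Longrightarrow> cmeet (u@v) (u'@v') = cmeet u u' @ cmeet v v'"
  by (simp add: cmeet_def)
lemma cmeet_take: "take a (cmeet x y) = cmeet (take a x) (take a y)"
  by (simp add: cmeet_def take_map take_zip)
lemma cmeet_drop: "drop a (cmeet x y) = cmeet (drop a x) (drop a y)"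
  by (simp add: cmeet_def drop_map drop_zip)

lemma interval_append:
  assumes "length u = length u'"
  shows "interval (u@v) (u'@v') = {p@q | p q. p \<in> interval u u' \<and> q \<in> interval v v'}"
proof -
  have "y \<in> interval (u@v) (u'@v') \<longleftrightarrow> (\<exists>p q. y = p@q \<and> p \<in> interval u u' \<and> q \<in> interval v v')" for y
  proof
    assume "y \<in> interval (u@v) (u'@v')"
    then have h: "cle (u@v) y" "cle y (u'@v')" by (auto simp: interval_def)
    have ly: "length y = length u + length v" using cle_length[OF h(1)] by simp
    define p where "p = take (length u) y"
    define q where "q = drop (length u) y"
    have y: "y = p @ q" by (simp add: p_def q_def)
    have lp: "length p = length u" using ly by (simp add: p_def)
    show "\<exists>p q. y = p@q \<and> p \<in> interval u u' \<and> q \<in> interval v v'"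
      using h y lp assms by (auto simp: interval_def cle_append)
  next
    assume "\<exists>p q. y = p@q \<and> p \<in> interval u u' \<and> q \<in> interval v v'"
    then obtain p q where "y = p@q" "p \<in> interval u u'" "q \<in> interval v v'" by blast
    then show "y \<in> interval (u@v) (u'@v')" using assms
      by (auto simp: interval_def cle_append dest: cle_length)
  qed
  then show ?thesis by blast
qed

definition IPs :: "nat \<Rightarrow> (bool list \<Rightarrow> bool list) \<Rightarrow> bool" where
  "IPs m f \<longleftrightarrow> (\<forall>x\<in>cube m. \<forall>z\<in>cube m. cle x z \<longrightarrow> f ` interval x z = interval (f x) (f z))"

definition maps :: "nat \<Rightarrow> nat \<Rightarrow> (bool list \<Rightarrow> bool list) \<Rightarrow> bool" where
  "maps m n f \<longleftrightarrow> (\<forall>x\<in>cube m. f x \<in> cube n)"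

lemma IPs_mono: "IPs m f \<Longrightarrow> x \<in> cube m \<Longrightarrow> z \<in> cube m \<Longrightarrow> cle x z \<Longrightarrow> cle (f x) (f z)"
proof -
  assume a: "IPs m f" "x \<in> cube m" "z \<in> cube m" "cle x z"
  have "z \<in> interval x z" using a by (simp add: interval_def)
  then have "f z \<in> interval (f x) (f z)" using a unfolding IPs_def by blast
  then show ?thesis by (simp add: interval_def)
qed

lemma interval_cube: "x \<in> cube m \<Longrightarrow> interval x z \<subseteq> cube m"
  by (auto simp: interval_def dest: cle_length)

lemma IPs_comp: "IPs l f \<Longrightarrow> IPs m g \<Longrightarrow> maps l m f \<Longrightarrow> IPs l (g \<circ> f)"
proof -
  assume f: "IPs l f" and g: "IPs m g" and mp: "maps l m f"
  show ?thesis unfolding IPs_def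
  proof (intro ballI impI)
    fix x z assume xz: "x \<in> cube l" "z \<in> cube l" "cle x z"
    have fx: "f x \<in> cube m" "f z \<in> cube m" using mp xz by (auto simp: maps_def)
    have c: "cle (f x) (f z)" using IPs_mono[OF f xz] .
    have "(g \<circ> f) ` interval x z = g ` (f ` interval x z)" by (simp add: image_comp)
    also have "\<dots> = g ` interval (f x) (f z)" using f xz by (simp add: IPs_def)
    also have "\<dots> = interval (g (f x)) (g (f z))" using g fx c by (simp add: IPs_def)
    finally show "(g \<circ> f) ` interval x z = interval ((g \<circ> f) x) ((g \<circ> f) z)" by simp
  qed
qed

lemma small_cube: "m \<le> 1 \<Longrightarrow> x \<in> cube m \<Longrightarrow> z \<in> cube m \<Longrightarrow> cle x z \<Longrightarrow> interval x z = {x, z}"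
  apply (cases x; cases z)
     apply (auto simp: interval_def)
     apply (auto simp: cle_Cons1 cle_Cons2 le_bool_def)
  done

lemma small_total: "m \<le> 1 \<Longrightarrow> x \<in> cube m \<Longrightarrow> z \<in> cube m \<Longrightarrow> cle x z \<or> cle z x"
  by (cases x; cases z) (auto simp: le_bool_def)

lemma D1gen_A: "D1gen m n f \<Longrightarrow> maps m n f \<and> IPs m f \<and> meet_hom m f"
proof (induction rule: D1gen.induct)
  case (base m n f)
  have mp: "maps m n f" using base by (simp add: maps_def)
  have ip: "IPs m f" unfolding IPs_def
  proof (intro ballI impI)
    fix x z assume xz: "x \<in> cube m" "z \<in> cube m" "cle x z"
    have "cle (f x) (f z)" using base xz by blast
    then show "f ` interval x z = interval (f x) (f z)"
      using small_cube[OF base(1) xz] small_cube[OF base(2), of "f x" "f z"] base xz by auto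
  qed
  have mh: "meet_hom m f" unfolding meet_hom_def
  proof (intro ballI)
    fix x y assume xy: "x \<in> cube m" "y \<in> cube m"
    show "f (cmeet x y) = cmeet (f x) (f y)"
      using small_total[OF base(1) xy] base xy by (auto simp: cle_cmeet1 cle_cmeet2)
  qed
  show ?case using mp ip mh by simp
next
  case (ident n)
  then show ?case by (auto simp: maps_def IPs_def meet_hom_def)
next
  case tau
  have mp: "maps 2 2 tau" by (simp add: maps_def tau_def)
  have ip: "IPs 2 tau" unfolding IPs_def
  proof (intro ballI impI)
    fix x z :: "bool list" assume xz: "x \<in> cube 2" "z \<in> cube 2" "cle x z"
    obtain a b where x: "x = [a,b]" using xz(1) by (cases x rule: list.exhaust; cases "tl x") auto
    obtain c d where z: "z = [c,d]" using xz(2) by (cases z rule: list.exhaust; cases "tl z") auto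
    show "tau ` interval x z = interval (tau x) (tau z)"
    proof (rule set_eqI)
      fix y
      have tx: "tau x = [b,a]" "tau z = [d,c]" by (simp_all add: x z tau_def)
      show "y \<in> tau ` interval x z \<longleftrightarrow> y \<in> interval (tau x) (tau z)"
      proof
        assume "y \<in> tau ` interval x z"
        then obtain p q where "y = tau [p,q]" "a \<le> p" "p \<le> c" "b \<le> q" "q \<le> d"
          unfolding x z interval2 by blast
        then show "y \<in> interval (tau x) (tau z)" unfolding tx interval2 by (simp add: tau_def)
      next
        assume "y \<in> interval (tau x) (tau z)"
        then obtain p q where "y = [q,p]" "a \<le> p" "p \<le> c" "b \<le> q" "q \<le> d"
          unfolding tx interval2 by blast
        then have "y = tau [p,q]" "[p,q] \<in> interval x z" unfolding x z interval2 by (auto simp: tau_def)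
        then show "y \<in> tau ` interval x z" by blast
      qed
    qed
  qed
  have mh: "meet_hom 2 tau"
    unfolding meet_hom_def
  proof (intro ballI)
    fix x y :: "bool list" assume xz: "x \<in> cube 2" "y \<in> cube 2"
    obtain a b where x: "x = [a,b]" using xz(1) by (cases x rule: list.exhaust; cases "tl x") auto
    obtain c d where z: "y = [c,d]" using xz(2) by (cases y rule: list.exhaust; cases "tl y") auto
    show "tau (cmeet x y) = cmeet (tau x) (tau y)" by (simp add: x z tau_def cmeet_def)
  qed
  show ?case using mp ip mh by simp
next
  case gamma
  have mp: "maps 2 1 gamma_minus" by (simp add: maps_def gamma_minus_def)
  have ip: "IPs 2 gamma_minus" unfolding IPs_def
  proof (intro ballI impI)
    fix x z :: "bool list" assume xz: "x \<in> cube 2" "z \<in> cube 2" "cle x z"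
    obtain a b where x: "x = [a,b]" using xz(1) by (cases x rule: list.exhaust; cases "tl x") auto
    obtain c d where z: "z = [c,d]" using xz(2) by (cases z rule: list.exhaust; cases "tl z") auto
    show "gamma_minus ` interval x z = interval (gamma_minus x) (gamma_minus z)"
    proof (rule set_eqI)
      fix y
      show "y \<in> gamma_minus ` interval x z \<longleftrightarrow> y \<in> interval (gamma_minus x) (gamma_minus z)"
      proof
        assume "y \<in> gamma_minus ` interval x z"
        then obtain p q where pq: "y = gamma_minus [p,q]" "a \<le> p" "p \<le> c" "b \<le> q" "q \<le> d"
          unfolding x z interval2 by blast
        have "min a b \<le> min p q" using pq(2,4) by (rule min.mono)
        moreover have "min p q \<le> min c d" using pq(3,5) by (rule min.mono)
        moreover have "y = [min p q]" using pq(1) by (simp add: gamma_minus_def)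
        ultimately show "y \<in> interval (gamma_minus x) (gamma_minus z)"
          unfolding x z gm interval1' by blast
      next
        assume "y \<in> interval (gamma_minus x) (gamma_minus z)"
        then obtain r where r: "y = [r]" "min a b \<le> r" "r \<le> min c d"
          unfolding x z gm interval1' by blast
        have ac: "a \<le> c" "b \<le> d" using xz(3) unfolding x z by auto
        show "y \<in> gamma_minus ` interval x z"
        proof (cases r)
          case True
          then have "c" "d" using r(3) by simp_all
          then have "y = gamma_minus [True,True]" "[True,True] \<in> interval x z"
            using r \<open>r\<close> unfolding x z interval2 gm by auto
          then show ?thesis by blast
        next
          case False
          then have "y = gamma_minus [a,b]" "[a,b] \<in> interval x z"
            using r ac unfolding x z interval2 gm by auto
          then show ?thesis by blast
        qed
      qed
    qed
  qed
  have mh: "meet_hom 2 gamma_minus"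
    unfolding meet_hom_def
  proof (intro ballI)
    fix x y :: "bool list" assume xz: "x \<in> cube 2" "y \<in> cube 2"
    obtain a b where x: "x = [a,b]" using xz(1) by (cases x rule: list.exhaust; cases "tl x") auto
    obtain c d where z: "y = [c,d]" using xz(2) by (cases y rule: list.exhaust; cases "tl y") auto
    show "gamma_minus (cmeet x y) = cmeet (gamma_minus x) (gamma_minus y)"
      by (simp add: x z gamma_minus_def cmeet_def) (auto simp: min_def)
  qed
  show ?case using mp ip mh by simp
next
  case (comp l m f n g)
  have mp: "maps l n (g \<circ> f)" using comp by (auto simp: maps_def)
  have ip: "IPs l (g \<circ> f)" using comp IPs_comp by blast
  have mh: "meet_hom l (g \<circ> f)" using comp unfolding meet_hom_def maps_def
    by (metis cmeet_length cube_iff comp_apply min.idem)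
  show ?case using mp ip mh by blast
next
  case (prod a b f c d g)
  have mp: "maps (a+c) (b+d) (fprod a f g)" using prod by (auto simp: maps_def fprod_def)
  have ip: "IPs (a+c) (fprod a f g)" unfolding IPs_def
  proof (intro ballI impI)
    fix x z :: "bool list" assume xz: "x \<in> cube (a+c)" "z \<in> cube (a+c)" "cle x z"
    define x1 x2 z1 z2 where "x1 = take a x" "x2 = drop a x" "z1 = take a z" "z2 = drop a z"
    have x: "x = x1 @ x2" and z: "z = z1 @ z2" by (simp_all add: x1_x2_z1_z2_def)
    have l: "length x1 = a" "length z1 = a" "length x2 = c" "length z2 = c"
      using xz by (auto simp: x1_x2_z1_z2_def)
    have c12: "cle x1 z1" "cle x2 z2" using xz(3) l unfolding x z by (simp_all add: cle_append)
    have I: "interval x z = {p@q | p q. p \<in> interval x1 z1 \<and> q \<in> interval x2 z2}"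
      unfolding x z using l by (simp add: interval_append)
    have fI: "f ` interval x1 z1 = interval (f x1) (f z1)"
      using prod.IH(1) l c12 by (simp add: IPs_def)
    have gI: "g ` interval x2 z2 = interval (g x2) (g z2)"
      using prod.IH(2) l c12 by (simp add: IPs_def)
    have lf: "length (f x1) = length (f z1)" using prod.IH(1) l by (simp add: maps_def)
    have "fprod a f g ` interval x z = {p@q | p q. p \<in> f ` interval x1 z1 \<and> q \<in> g ` interval x2 z2}"
      unfolding I
    proof (rule set_eqI, rule iffI)
      fix y assume "y \<in> fprod a f g ` {p@q | p q. p \<in> interval x1 z1 \<and> q \<in> interval x2 z2}"
      then obtain p q where "y = fprod a f g (p@q)" "p \<in> interval x1 z1" "q \<in> interval x2 z2" by blast
      moreover have "length p = a" using interval_sub[OF \<open>p \<in> interval x1 z1\<close>] l by simp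
      ultimately show "y \<in> {p@q | p q. p \<in> f ` interval x1 z1 \<and> q \<in> g ` interval x2 z2}"
        by (auto simp: fprod_def)
    next
      fix y assume "y \<in> {p@q | p q. p \<in> f ` interval x1 z1 \<and> q \<in> g ` interval x2 z2}"
      then obtain p q where y: "y = f p @ g q" "p \<in> interval x1 z1" "q \<in> interval x2 z2" by blast
      have "length p = a" using interval_sub[OF y(2)] l by simp
      then have "y = fprod a f g (p@q)" using y by (simp add: fprod_def)
      then show "y \<in> fprod a f g ` {p@q | p q. p \<in> interval x1 z1 \<and> q \<in> interval x2 z2}"
        using y by blast
    qed
    also have "\<dots> = interval (f x1 @ g x2) (f z1 @ g z2)"
      unfolding fI gI using lf by (simp add: interval_append)
    also have "\<dots> = interval (fprod a f g x) (fprod a f g z)"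
      by (simp add: fprod_def x1_x2_z1_z2_def)
    finally show "fprod a f g ` interval x z = interval (fprod a f g x) (fprod a f g z)" .
  qed
  have mh: "meet_hom (a+c) (fprod a f g)" unfolding meet_hom_def
  proof (intro ballI)
    fix x y :: "bool list" assume xy: "x \<in> cube (a+c)" "y \<in> cube (a+c)"
    have "fprod a f g (cmeet x y) = f (cmeet (take a x) (take a y)) @ g (cmeet (drop a x) (drop a y))"
      by (simp add: fprod_def cmeet_take cmeet_drop)
    also have "\<dots> = cmeet (f (take a x)) (f (take a y)) @ cmeet (g (drop a x)) (g (drop a y))"
      using prod.IH xy by (simp add: meet_hom_def)
    also have "\<dots> = cmeet (fprod a f g x) (fprod a f g y)"
      using prod.IH xy by (simp add: fprod_def cmeet_append maps_def)
    finally show "fprod a f g (cmeet x y) = cmeet (fprod a f g x) (fprod a f g y)" .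
  qed
  show ?case using mp ip mh by simp
qed

definition rep :: "nat \<Rightarrow> (nat \<Rightarrow> bool) \<Rightarrow> (nat \<Rightarrow> nat set) \<Rightarrow> bool list \<Rightarrow> bool list" where
  "rep n z S x = map (\<lambda>j. \<not> z j \<and> (\<forall>i\<in>S j. x!i)) [0..<n]"

definition goodrep :: "nat \<Rightarrow> nat \<Rightarrow> (nat \<Rightarrow> nat set) \<Rightarrow> bool" where
  "goodrep m n S \<longleftrightarrow> (\<forall>j<n. S j \<subseteq> {..<m}) \<and> (\<forall>j<n. \<forall>k<n. j \<noteq> k \<longrightarrow> S j \<inter> S k = {})"

lemma cmeet_cle2: "length u = length v \<Longrightarrow> cle (cmeet u v) v"
  by (auto simp: cle_nth cmeet_nth)

lemma e_interval:
  assumes "i < m" "y \<in> interval ((replicate m True)[i := False]) (replicate m True)"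
  shows "y = (replicate m True)[i := False] \<or> y = replicate m True"
proof -
  have ly: "length y = m" using interval_sub[OF assms(2)] by simp
  have c: "cle ((replicate m True)[i := False]) y" using assms(2) by (simp add: interval_def)
  have other: "\<forall>l<m. l \<noteq> i \<longrightarrow> y!l" using c ly by (auto simp: cle_nth)
  show ?thesis
  proof (cases "y!i")
    case True
    then have "y = replicate m True" using other ly by (auto intro!: nth_equalityI)
    then show ?thesis by simp
  next
    case False
    then have "y = (replicate m True)[i := False]" using other ly assms(1)
      by (auto intro!: nth_equalityI simp: nth_list_update)
    then show ?thesis by simp
  qed
qed

lemma partB:
  assumes mp: "maps m n \<phi>" and ip: "interval_preserving m n \<phi>" and mh: "meet_hom m \<phi>"
  shows "\<exists>z S. goodrep m n S \<and> (\<forall>x\<in>cube m. \<phi> x = rep n z S x)"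
proof -
  have mono: "cle (\<phi> x) (\<phi> y)" if "x \<in> cube m" "y \<in> cube m" "cle x y" for x y
  proof -
    have "\<phi> x = cmeet (\<phi> x) (\<phi> y)" using mh that cle_cmeet1[OF that(3)] by (metis meet_hom_def)
    then show ?thesis using mp that by (metis cmeet_cle2 maps_def cube_iff)
  qed
  define top where "top = replicate m True"
  define e where "e i = top[i := False]" for i
  have top_c: "top \<in> cube m" by (simp add: top_def)
  have e_c: "e i \<in> cube m" for i by (simp add: e_def top_def)
  have x_top: "cle x top" if "x \<in> cube m" for x using that by (auto simp: top_def cle_nth)
  define z where "z j = (\<not> \<phi> top ! j)" for j
  define S where "S j = (if \<phi> top ! j then {i. i < m \<and> \<not> \<phi> (e i) ! j} else {})" for j
  have lphi: "length (\<phi> x) = n" if "x \<in> cube m" for x using mp that by (simp add: maps_def)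
  have comp: "\<phi> x ! j = (\<not> z j \<and> (\<forall>i\<in>S j. x!i))" if x: "x \<in> cube m" and j: "j < n" for x j
  proof (cases "\<phi> top ! j")
    case False
    have "\<phi> x ! j \<le> \<phi> top ! j" using mono[OF x top_c x_top[OF x]] j lphi[OF x] by (simp add: cle_nth)
    then show ?thesis using False by (simp add: z_def)
  next
    case T: True
    show ?thesis
    proof
      assume px: "\<phi> x ! j"
      have "x ! i" if i: "i \<in> S j" for i
      proof (rule ccontr)
        assume nx: "\<not> x ! i"
        have im: "i < m" "\<not> \<phi> (e i) ! j" using i T by (auto simp: S_def)
        have "cle x (e i)" using x nx im by (auto simp: cle_nth e_def top_def nth_list_update)
        then have "\<phi> x ! j \<le> \<phi> (e i) ! j" using mono[OF x e_c] j lphi[OF x] by (simp add: cle_nth)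
        then show False using px im by simp
      qed
      then show "\<not> z j \<and> (\<forall>i\<in>S j. x ! i)" using T by (simp add: z_def)
    next
      assume r: "\<not> z j \<and> (\<forall>i\<in>S j. x ! i)"
      define xF where "xF F = map (\<lambda>i. i \<notin> F) [0..<m]" for F :: "nat set"
      have ind: "finite F \<Longrightarrow> F \<subseteq> {..<m} \<Longrightarrow> F \<inter> S j = {} \<Longrightarrow> \<phi> (xF F) ! j" for F
      proof (induction F rule: finite_induct)
        case empty
        have "xF {} = top" by (simp add: xF_def top_def map_replicate_const)
        then show ?case using T by simp
      next
        case (insert i F)
        have im: "i < m" using insert by auto
        have eq: "xF (insert i F) = cmeet (xF F) (e i)"
          by (auto intro!: nth_equalityI simp: xF_def cmeet_nth e_def top_def nth_list_update)
        have c1: "xF F \<in> cube m" by (simp add: xF_def)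
        have "\<phi> (xF (insert i F)) = cmeet (\<phi> (xF F)) (\<phi> (e i))"
          unfolding eq using mh c1 e_c by (simp add: meet_hom_def)
        moreover have "\<phi> (xF F) ! j" using insert by auto
        moreover have "\<phi> (e i) ! j" using insert im T by (auto simp: S_def)
        ultimately show ?case using lphi[OF c1] lphi[OF e_c] j by (simp add: cmeet_nth)
      qed
      have "x = xF {i. i < m \<and> \<not> x!i}" using x by (auto intro!: nth_equalityI simp: xF_def)
      moreover have "\<phi> (xF {i. i < m \<and> \<not> x!i}) ! j" using r by (intro ind) auto
      ultimately show "\<phi> x ! j" by simp
    qed
  qed
  have disj: "S j \<inter> S k = {}" if jk: "j < n" "k < n" "j \<noteq> k" for j k
  proof (rule ccontr)
    assume "S j \<inter> S k \<noteq> {}"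
    then obtain i where i: "i \<in> S j" "i \<in> S k" by blast
    then have im: "i < m" and tj: "\<phi> top ! j" and tk: "\<phi> top ! k"
      and ej: "\<not> \<phi> (e i) ! j" and ek: "\<not> \<phi> (e i) ! k"
      by (auto simp: S_def split: if_splits)
    have cei: "cle (e i) top" using x_top[OF e_c] .
    have "is_interval m (interval (e i) top)" unfolding is_interval_def using e_c top_c cei by blast
    then have "is_interval n (\<phi> ` interval (e i) top)" using ip by (simp add: interval_preserving_def)
    then obtain a b where ab: "a \<in> cube n" "b \<in> cube n" "cle a b" "\<phi> ` interval (e i) top = interval a b"
      unfolding is_interval_def by blast
    have "e i \<in> interval (e i) top" "top \<in> interval (e i) top" using cei by (auto simp: interval_def)
    then have in1: "\<phi> (e i) \<in> interval a b" "\<phi> top \<in> interval a b" using ab(4) by blast+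
    define w where "w = (\<phi> top)[j := False]"
    have lw: "length w = n" by (simp add: w_def lphi[OF top_c])
    have "cle (\<phi> (e i)) w"
      using mono[OF e_c top_c cei] ej lphi[OF e_c] lphi[OF top_c] jk
      by (auto simp: cle_nth w_def nth_list_update)
    moreover have "cle w (\<phi> top)" using lphi[OF top_c] jk by (auto simp: cle_nth w_def nth_list_update)
    ultimately have "w \<in> interval a b" using in1 by (auto simp: interval_def intro: cle_trans)
    then obtain y where y: "y \<in> interval (e i) top" "w = \<phi> y" using ab(4) by blast
    have "y = e i \<or> y = top" using e_interval[OF im] y(1) by (simp add: e_def top_def)
    moreover have "w ! j = False" using jk lphi[OF top_c] by (simp add: w_def)
    moreover have "w ! k = True" using jk tk by (simp add: w_def)
    ultimately show False using y(2) tj ek by auto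
  qed
  have "goodrep m n S" unfolding goodrep_def using disj by (auto simp: S_def)
  moreover have "\<forall>x\<in>cube m. \<phi> x = rep n z S x"
    using comp lphi by (auto intro!: nth_equalityI simp: rep_def)
  ultimately show ?thesis by blast
qed

lemma D1gen_maps: "D1gen m n f \<Longrightarrow> maps m n f" using D1gen_A by blast

lemma Mor_maps: "D1_morphism m n f \<Longrightarrow> maps m n f"
  unfolding D1_morphism_def by (metis D1gen_maps maps_def)

lemma Mor_cong: "D1_morphism m n f \<Longrightarrow> (\<forall>x\<in>cube m. f x = g x) \<Longrightarrow> D1_morphism m n g"
  unfolding D1_morphism_def by metis

lemma Mor_eq: "D1_morphism m n f \<Longrightarrow> m = m' \<Longrightarrow> n = n' \<Longrightarrow> D1_morphism m' n' f" by simp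

lemma Mor_gen: "D1gen m n f \<Longrightarrow> D1_morphism m n f"
  unfolding D1_morphism_def by blast

lemma Mor_comp: "D1_morphism l m f \<Longrightarrow> D1_morphism m n g \<Longrightarrow> D1_morphism l n (g \<circ> f)"
proof -
  assume f: "D1_morphism l m f" and g: "D1_morphism m n g"
  obtain f' where f': "D1gen l m f'" "\<forall>x\<in>cube l. f x = f' x" using f unfolding D1_morphism_def by blast
  obtain g' where g': "D1gen m n g'" "\<forall>x\<in>cube m. g x = g' x" using g unfolding D1_morphism_def by blast
  have "D1gen l n (g' \<circ> f')" using f' g' D1gen.comp by blast
  moreover have "\<forall>x\<in>cube l. (g \<circ> f) x = (g' \<circ> f') x"
    using f' g' Mor_maps[OF f] by (simp add: maps_def)
  ultimately show ?thesis unfolding D1_morphism_def by blast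
qed

lemma Mor_prod: "D1_morphism a b f \<Longrightarrow> D1_morphism c d g \<Longrightarrow> D1_morphism (a+c) (b+d) (fprod a f g)"
proof -
  assume f: "D1_morphism a b f" and g: "D1_morphism c d g"
  obtain f' where f': "D1gen a b f'" "\<forall>x\<in>cube a. f x = f' x" using f unfolding D1_morphism_def by blast
  obtain g' where g': "D1gen c d g'" "\<forall>x\<in>cube c. g x = g' x" using g unfolding D1_morphism_def by blast
  have "D1gen (a+c) (b+d) (fprod a f' g')" using f' g' D1gen.prod by blast
  moreover have "\<forall>x\<in>cube (a+c). fprod a f g x = fprod a f' g' x"
    using f' g' by (simp add: fprod_def)
  ultimately show ?thesis unfolding D1_morphism_def by blast
qed

lemma Mor_id: "D1_morphism n n id" by (rule Mor_gen, rule D1gen.ident)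

lemma Mor_const: "c \<in> cube n \<Longrightarrow> D1_morphism 0 n (\<lambda>_. c)"
proof (induction c arbitrary: n)
  case Nil
  have "D1gen 0 0 (\<lambda>_. [])" by (rule D1gen.base) auto
  then show ?case using Nil by (simp add: Mor_gen)
next
  case (Cons b c)
  have b1: "D1gen 0 1 (\<lambda>_. [b])" by (rule D1gen.base) auto
  then have "D1_morphism (0+0) (1 + length c) (fprod 0 (\<lambda>_. [b]) (\<lambda>_. c))"
    using Mor_prod[OF Mor_gen[OF b1] Cons.IH[of "length c"]] by simp
  then show ?case using Cons.prems by (auto simp: fprod_def[abs_def])
qed

lemma Mor_bang: "D1_morphism 1 0 (\<lambda>_. [])"
  by (rule Mor_gen, rule D1gen.base) auto

lemma Mor_shift: "j \<le> n \<Longrightarrow> D1_morphism (Suc n) (Suc n) (\<lambda>x. take j (tl x) @ hd x # drop j (tl x))"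
proof (induction j arbitrary: n)
  case 0
  show ?case by (rule Mor_cong[OF Mor_id], intro ballI) (case_tac x, auto)
next
  case (Suc j)
  then obtain n' where n: "n = Suc n'" by (cases n) auto
  have s: "D1_morphism (Suc n') (Suc n') (\<lambda>x. take j (tl x) @ hd x # drop j (tl x))"
    using Suc n by simp
  have p1: "D1_morphism (1 + Suc n') (1 + Suc n') (fprod 1 id (\<lambda>x. take j (tl x) @ hd x # drop j (tl x)))"
    by (rule Mor_prod[OF Mor_id s])
  have p2: "D1_morphism (2 + n') (2 + n') (fprod 2 tau id)"
    by (rule Mor_prod[OF Mor_gen[OF D1gen.tau] Mor_id])
  have "D1_morphism (Suc n) (Suc n) (fprod 1 id (\<lambda>x. take j (tl x) @ hd x # drop j (tl x)) \<circ> fprod 2 tau id)"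
    using Mor_comp[OF p2 Mor_eq[OF p1]] n by simp
  then show ?case
  proof (rule Mor_cong, intro ballI)
    fix x :: "bool list" assume "x \<in> cube (Suc n)"
    then obtain b y0 y' where x: "x = b # y0 # y'" using n by (cases x; cases "tl x") auto
    show "(fprod 1 id (\<lambda>x. take j (tl x) @ hd x # drop j (tl x)) \<circ> fprod 2 tau id) x =
          take (Suc j) (tl x) @ hd x # drop (Suc j) (tl x)"
      by (simp add: x fprod_def tau_def)
  qed
qed

lemma Mor_H: "j < n \<Longrightarrow> D1_morphism (Suc n) n (\<lambda>x. (tl x)[j := (hd x \<and> tl x ! j)])"
proof -
  assume j: "j < n"
  define r where "r = n - j - 1"
  have n: "n = j + 1 + r" using j by (simp add: r_def)
  have g: "D1_morphism (2 + r) (1 + r) (fprod 2 gamma_minus id)"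
    by (rule Mor_prod[OF Mor_gen[OF D1gen.gamma] Mor_id])
  have g2: "D1_morphism (j + (2 + r)) (j + (1 + r)) (fprod j id (fprod 2 gamma_minus id))"
    by (rule Mor_prod[OF Mor_id g])
  have "D1_morphism (Suc n) n (fprod j id (fprod 2 gamma_minus id) \<circ> (\<lambda>x. take j (tl x) @ hd x # drop j (tl x)))"
    using Mor_comp[OF Mor_shift[of j n] Mor_eq[OF g2]] j n by simp
  then show ?thesis
  proof (rule Mor_cong, intro ballI)
    fix x :: "bool list" assume "x \<in> cube (Suc n)"
    then obtain b y where x: "x = b # y" and ly: "length y = n" by (cases x) auto
    have dy: "drop j y = y ! j # drop (Suc j) y" using j ly by (simp add: Cons_nth_drop_Suc)
    show "(fprod j id (fprod 2 gamma_minus id) \<circ> (\<lambda>x. take j (tl x) @ hd x # drop j (tl x))) x =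
          (tl x)[j := (hd x \<and> tl x ! j)]"
      using j ly by (simp add: x fprod_def dy gamma_minus_def upd_conv_take_nth_drop)
  qed
qed

lemma all_Cons: "(\<forall>i\<in>S. (b#xs)!i) \<longleftrightarrow> ((0 \<in> S \<longrightarrow> b) \<and> (\<forall>i\<in>{i. Suc i \<in> S}. xs!i))"
proof
  assume h: "\<forall>i\<in>S. (b#xs)!i"
  have "b" if "0 \<in> S" using h that by (metis nth_Cons_0)
  moreover have "xs!i" if "Suc i \<in> S" for i using h that by (metis nth_Cons_Suc)
  ultimately show "(0 \<in> S \<longrightarrow> b) \<and> (\<forall>i\<in>{i. Suc i \<in> S}. xs!i)" by blast
next
  assume h: "(0 \<in> S \<longrightarrow> b) \<and> (\<forall>i\<in>{i. Suc i \<in> S}. xs!i)"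
  show "\<forall>i\<in>S. (b#xs)!i"
  proof
    fix i assume "i \<in> S" then show "(b#xs)!i" using h by (cases i) auto
  qed
qed

lemma repk: "k < n \<Longrightarrow> rep n z S x ! k = (\<not> z k \<and> (\<forall>i\<in>S k. x!i))"
  by (simp add: rep_def)

lemma partC: "goodrep m n S \<Longrightarrow> D1_morphism m n (rep n z S)"
proof (induction m arbitrary: S)
  case 0
  then have "S j = {}" if "j < n" for j using that by (auto simp: goodrep_def)
  then have eq0: "\<forall>x\<in>cube 0. (\<lambda>_. map (\<lambda>j. \<not> z j) [0..<n]) x = rep n z S x" by (simp add: rep_def)
  have "D1_morphism 0 n (\<lambda>_. map (\<lambda>j. \<not> z j) [0..<n])" by (rule Mor_const) simp
  then show ?case by (rule Mor_cong) (use eq0 in blast)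
next
  case (Suc m)
  define S' where "S' j = {i. Suc i \<in> S j}" for j
  have g': "goodrep m n S'" using Suc.prems unfolding goodrep_def S'_def by (intro conjI) (force, blast)
  have IH: "D1_morphism m n (rep n z S')" using Suc.IH[OF g'] .
  have eqC: "rep n z S (b # xs) ! k = (\<not> z k \<and> (0 \<in> S k \<longrightarrow> b) \<and> rep n z S' xs ! k)" if "k < n" for k b xs
    using that by (auto simp: rep_def all_Cons S'_def)
  have lr: "length (rep n z S x) = n" for S x by (simp add: rep_def)
  show ?case
  proof (cases "\<exists>j<n. 0 \<in> S j")
    case False
    have "D1_morphism (1 + m) (0 + m) (fprod 1 (\<lambda>_. []) id)" by (rule Mor_prod[OF Mor_bang Mor_id])
    then have "D1_morphism (Suc m) n (rep n z S' \<circ> fprod 1 (\<lambda>_. []) id)"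
      using Mor_comp IH by fastforce
    then show ?thesis
    proof (rule Mor_cong, intro ballI)
      fix x :: "bool list" assume "x \<in> cube (Suc m)"
      then obtain b xs where x: "x = b # xs" by (cases x) auto
      show "(rep n z S' \<circ> fprod 1 (\<lambda>_. []) id) x = rep n z S x"
        using False by (auto intro!: nth_equalityI simp: x fprod_def lr eqC) (auto simp: rep_def)
    qed
  next
    case True
    then obtain j where j: "j < n" "0 \<in> S j" by blast
    have oth: "0 \<notin> S k" if "k < n" "k \<noteq> j" for k
      using Suc.prems j that unfolding goodrep_def by blast
    have p: "D1_morphism (1 + m) (1 + n) (fprod 1 id (rep n z S'))" by (rule Mor_prod[OF Mor_id IH])
    have "D1_morphism (Suc m) n ((\<lambda>x. (tl x)[j := (hd x \<and> tl x ! j)]) \<circ> fprod 1 id (rep n z S'))"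
      using Mor_comp[OF p Mor_eq[OF Mor_H[OF j(1)]]] by simp
    then show ?thesis
    proof (rule Mor_cong, intro ballI)
      fix x :: "bool list" assume "x \<in> cube (Suc m)"
      then obtain b xs where x: "x = b # xs" by (cases x) auto
      show "((\<lambda>x. (tl x)[j := (hd x \<and> tl x ! j)]) \<circ> fprod 1 id (rep n z S')) x = rep n z S x"
      proof (rule nth_equalityI)
        show "length (((\<lambda>x. (tl x)[j := (hd x \<and> tl x ! j)]) \<circ> fprod 1 id (rep n z S')) x) = length (rep n z S x)"
          by (simp add: x fprod_def lr)
      next
        fix k assume "k < length (((\<lambda>x. (tl x)[j := (hd x \<and> tl x ! j)]) \<circ> fprod 1 id (rep n z S')) x)"
        then have k: "k < n" by (simp add: x fprod_def lr)
        show "(((\<lambda>x. (tl x)[j := (hd x \<and> tl x ! j)]) \<circ> fprod 1 id (rep n z S')) x) ! k = rep n z S x ! k"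
          using k j oth[of k] by (cases "k = j") (auto simp: x fprod_def lr nth_list_update repk all_Cons S'_def)
      qed
    qed
  qed
qed

theorem mainTheorem3:
  fixes \<phi> :: "bool list \<Rightarrow> bool list" and m n :: nat
  assumes "\<forall>x\<in>cube m. \<phi> x \<in> cube n"
  shows "D1_morphism m n \<phi> \<longleftrightarrow> (interval_preserving m n \<phi> \<and> meet_hom m \<phi>)"
proof
  assume "D1_morphism m n \<phi>"
  then obtain f where f: "D1gen m n f" "\<forall>x\<in>cube m. \<phi> x = f x" unfolding D1_morphism_def by blast
  have A: "maps m n f" "IPs m f" "meet_hom m f" using D1gen_A[OF f(1)] by auto
  have ip: "interval_preserving m n \<phi>" unfolding interval_preserving_def
  proof (intro allI impI)
    fix S assume "is_interval m S"
    then obtain x z where xz: "x \<in> cube m" "z \<in> cube m" "cle x z" "S = interval x z"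
      unfolding is_interval_def by blast
    have "\<phi> ` S = f ` S" using f(2) interval_cube[OF xz(1)] xz(4) by (intro image_cong) auto
    also have "\<dots> = interval (f x) (f z)" using A(2) xz by (simp add: IPs_def)
    finally show "is_interval n (\<phi> ` S)"
      unfolding is_interval_def using A(1) IPs_mono[OF A(2) xz(1-3)] xz unfolding maps_def by blast
  qed
  have mh: "meet_hom m \<phi>" unfolding meet_hom_def
  proof (intro ballI)
    fix x y assume xy: "x \<in> cube m" "y \<in> cube m"
    then have "cmeet x y \<in> cube m" by simp
    then show "\<phi> (cmeet x y) = cmeet (\<phi> x) (\<phi> y)" using f(2) xy A(3) by (simp add: meet_hom_def)
  qed
  show "interval_preserving m n \<phi> \<and> meet_hom m \<phi>" using ip mh by blast
next
  assume "interval_preserving m n \<phi> \<and> meet_hom m \<phi>"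
  then obtain z S where "goodrep m n S" "\<forall>x\<in>cube m. \<phi> x = rep n z S x"
    using partB assms unfolding maps_def by blast
  then show "D1_morphism m n \<phi>" using partC Mor_cong by metis
qed

end
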